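(* Let $n\ge 2$, $k\ge 1$, and let $\pi$ be an even permutation of the vertex set $\{0,\dots,k+1\}$ of $K_{k+2}$. Then $c_{n,k}\simeq \pi\circ c_{n,k}$ as graph homomorphisms $\overline{SG}_{n,k}\to K_{k+2}$.
   Context: Let $m=2n+k$. A subset $S\subseteq\{0,\dots,m-1\}$ is semi-stable if $\{i,i+1\}\not\subseteq S$ for all $0\le i\le m-2$. The semi-stable Kneser graph $\overline{SG}_{n,k}$ has as vertices the semi-stable $n$-element subsets of $\{0,\dots,m-1\}$, two being adjacent iff they are disjoint. $K_{k+2}$ is the loopless complete graph on $\{0,\dots,k+1\}$, and $c_{n,k}\colon\overline{SG}_{n,k}\to K_{k+2}$ is the canonical colouring $S\mapsto\min S$. For graphs $G,H$ and maps $f,g\colon V(G)\to V(H)$, write $f\sim g$ if $(f(u),g(v))\in E(H)$ for all $(u,v)\in E(G)$. For graph homomorphisms $f,g\colon G\to H$, $f\simeq g$ means there are graph homomorphisms $f=f_0,f_1,\dots,f_N=g$ ($N\ge0$) with $f_{i}\sim f_{i+1}$ for all $i$. *)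

theory Defs
  imports "HOL-Combinatorics.Permutations"
begin

definition semi_stable :: "nat \<Rightarrow> nat set \<Rightarrow> bool" where
  "semi_stable m S \<longleftrightarrow> S \<subseteq> {..<m} \<and> (\<forall>i. i + 2 \<le> m \<longrightarrow> \<not> {i, i+1} \<subseteq> S)"

definition SG_verts :: "nat \<Rightarrow> nat \<Rightarrow> nat set set" where
  "SG_verts n k = {S. semi_stable (2*n+k) S \<and> card S = n}"

definition SG_adj :: "nat set \<Rightarrow> nat set \<Rightarrow> bool" where
  "SG_adj S T \<longleftrightarrow> S \<inter> T = {}"

definition K_verts :: "nat \<Rightarrow> nat set" where
  "K_verts k = {0..k+1}"

definition K_adj :: "nat \<Rightarrow> nat \<Rightarrow> bool" where
  "K_adj x y \<longleftrightarrow> x \<noteq> y"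

definition canon_col :: "nat set \<Rightarrow> nat" where
  "canon_col S = Min S"

definition graph_hom :: "'a set \<Rightarrow> ('a \<Rightarrow> 'a \<Rightarrow> bool) \<Rightarrow> 'b set \<Rightarrow> ('b \<Rightarrow> 'b \<Rightarrow> bool) \<Rightarrow> ('a \<Rightarrow> 'b) \<Rightarrow> bool" where
  "graph_hom VG EG VH EH f \<longleftrightarrow> (\<forall>u\<in>VG. f u \<in> VH) \<and> (\<forall>u\<in>VG. \<forall>v\<in>VG. EG u v \<longrightarrow> EH (f u) (f v))"

definition map_sim :: "'a set \<Rightarrow> ('a \<Rightarrow> 'a \<Rightarrow> bool) \<Rightarrow> ('b \<Rightarrow> 'b \<Rightarrow> bool) \<Rightarrow> ('a \<Rightarrow> 'b) \<Rightarrow> ('a \<Rightarrow> 'b) \<Rightarrow> bool" where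
  "map_sim VG EG EH f g \<longleftrightarrow> (\<forall>u\<in>VG. \<forall>v\<in>VG. EG u v \<longrightarrow> EH (f u) (g v))"

definition hom_homotopic :: "'a set \<Rightarrow> ('a \<Rightarrow> 'a \<Rightarrow> bool) \<Rightarrow> 'b set \<Rightarrow> ('b \<Rightarrow> 'b \<Rightarrow> bool) \<Rightarrow> ('a \<Rightarrow> 'b) \<Rightarrow> ('a \<Rightarrow> 'b) \<Rightarrow> bool" where
  "hom_homotopic VG EG VH EH f g \<longleftrightarrow>
     graph_hom VG EG VH EH f \<and> graph_hom VG EG VH EH g \<and>
     (\<exists>N::nat. \<exists>h :: nat \<Rightarrow> 'a \<Rightarrow> 'b.
        (\<forall>u\<in>VG. h 0 u = f u) \<and> (\<forall>u\<in>VG. h N u = g u) \<and>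
        (\<forall>i\<le>N. graph_hom VG EG VH EH (h i)) \<and>
        (\<forall>i<N. map_sim VG EG EH (h i) (h (Suc i))))"

end

theory Submission
  imports Defs
begin

section \<open>Generic facts about homotopy of graph homomorphisms\<close>

lemma graph_hom_cong:
  assumes "graph_hom V E C F f" "\<forall>u\<in>V. f u = f' u"
  shows "graph_hom V E C F f'"
  using assms unfolding graph_hom_def by auto

lemma map_sim_cong:
  assumes "map_sim V E F f g" "\<forall>u\<in>V. f u = f' u" "\<forall>u\<in>V. g u = g' u"
  shows "map_sim V E F f' g'"
  using assms unfolding map_sim_def by auto

lemma hh_homs:
  assumes "hom_homotopic V E C F f g"
  shows "graph_hom V E C F f" "graph_hom V E C F g"
  using assms unfolding hom_homotopic_def by auto

lemma hh_refl:
  assumes "graph_hom V E C F f"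
  shows "hom_homotopic V E C F f f"
  unfolding hom_homotopic_def
  by (rule conjI[OF assms conjI[OF assms]], rule exI[of _ 0], rule exI[of _ "\<lambda>_. f"])
     (simp add: assms)

lemma hh_step:
  assumes "graph_hom V E C F f" "graph_hom V E C F g" "map_sim V E F f g"
  shows "hom_homotopic V E C F f g"
  unfolding hom_homotopic_def
proof (intro conjI assms exI[of _ 1] exI[of _ "\<lambda>i. if i = 0 then f else g"])
  show "\<forall>i\<le>1. graph_hom V E C F (if i = 0 then f else g)" using assms by auto
  show "\<forall>i<1. map_sim V E F (if i = 0 then f else g) (if Suc i = 0 then f else g)"
    using assms by auto
qed auto

lemma hh_cong:
  assumes "hom_homotopic V E C F f g" "\<forall>u\<in>V. f u = f' u" "\<forall>u\<in>V. g u = g' u"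
  shows "hom_homotopic V E C F f' g'"
  using assms unfolding hom_homotopic_def
  by (auto intro: graph_hom_cong)

lemma hh_trans:
  assumes "hom_homotopic V E C F f g" "hom_homotopic V E C F g k"
  shows "hom_homotopic V E C F f k"
proof -
  from assms(1) obtain N1 h1 where A: "\<forall>u\<in>V. h1 0 u = f u" "\<forall>u\<in>V. h1 N1 u = g u"
    "\<forall>i\<le>N1. graph_hom V E C F (h1 i)" "\<forall>i<N1. map_sim V E F (h1 i) (h1 (Suc i))"
    and hf: "graph_hom V E C F f"
    unfolding hom_homotopic_def by blast
  from assms(2) obtain N2 h2 where B: "\<forall>u\<in>V. h2 0 u = g u" "\<forall>u\<in>V. h2 N2 u = k u"
    "\<forall>i\<le>N2. graph_hom V E C F (h2 i)" "\<forall>i<N2. map_sim V E F (h2 i) (h2 (Suc i))"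
    and hk: "graph_hom V E C F k"
    unfolding hom_homotopic_def by blast
  define h where "h i = (if i \<le> N1 then h1 i else h2 (i - N1))" for i
  have "\<forall>u\<in>V. h 0 u = f u" using A by (simp add: h_def)
  moreover have "\<forall>u\<in>V. h (N1 + N2) u = k u"
    using A B by (auto simp: h_def)
  moreover have "\<forall>i\<le>N1+N2. graph_hom V E C F (h i)"
    using A B by (auto simp: h_def)
  moreover have "\<forall>i<N1+N2. map_sim V E F (h i) (h (Suc i))"
  proof (intro allI impI)
    fix i assume i: "i < N1 + N2"
    show "map_sim V E F (h i) (h (Suc i))"
    proof (cases "i < N1")
      case True thus ?thesis using A by (simp add: h_def)
    next
      case False
      hence "i - N1 < N2" "Suc i - N1 = Suc (i - N1)" using i by auto
      hence ms: "map_sim V E F (h2 (i - N1)) (h2 (Suc i - N1))" using B by simp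
      show ?thesis
      proof (cases "i = N1")
        case True
        have "\<forall>u\<in>V. h2 (i - N1) u = h i u" using True A B by (simp add: h_def)
        moreover have "\<forall>u\<in>V. h2 (Suc i - N1) u = h (Suc i) u" using True by (simp add: h_def)
        ultimately show ?thesis using map_sim_cong[OF ms] by blast
      next
        case False
        thus ?thesis using ms \<open>\<not> i < N1\<close> by (simp add: h_def)
      qed
    qed
  qed
  ultimately show ?thesis unfolding hom_homotopic_def using hf hk by blast
qed

lemma hh_comp:
  assumes "hom_homotopic V E C K_adj f g" "inj_on p C" "p ` C \<subseteq> C'"
  shows "hom_homotopic V E C' K_adj (p \<circ> f) (p \<circ> g)"
proof -
  have gh: "graph_hom V E C' K_adj (p \<circ> h)" if "graph_hom V E C K_adj h" for h
    using that assms(2,3) unfolding graph_hom_def K_adj_def o_def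
    by (metis image_subset_iff inj_on_contraD)
  have ms: "map_sim V E K_adj (p \<circ> h) (p \<circ> h')"
    if "graph_hom V E C K_adj h" "graph_hom V E C K_adj h'" "map_sim V E K_adj h h'" for h h'
    using that assms(2) unfolding graph_hom_def map_sim_def K_adj_def o_def
    by (metis inj_on_contraD)
  from assms(1) obtain N h where A: "\<forall>u\<in>V. h 0 u = f u" "\<forall>u\<in>V. h N u = g u"
    "\<forall>i\<le>N. graph_hom V E C K_adj (h i)" "\<forall>i<N. map_sim V E K_adj (h i) (h (Suc i))"
    and hf: "graph_hom V E C K_adj f" and hg: "graph_hom V E C K_adj g"
    unfolding hom_homotopic_def by blast
  show ?thesis unfolding hom_homotopic_def
    apply (intro conjI gh[OF hf] gh[OF hg] exI[of _ N] exI[of _ "\<lambda>i. p \<circ> h i"])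
    using A gh ms by auto
qed

lemma hh_pull:
  assumes "hom_homotopic W E' C F f g" "\<forall>u\<in>V. q u \<in> W"
    "\<forall>u\<in>V. \<forall>v\<in>V. E u v \<longrightarrow> E' (q u) (q v)"
  shows "hom_homotopic V E C F (f \<circ> q) (g \<circ> q)"
proof -
  have gh: "graph_hom V E C F (h \<circ> q)" if "graph_hom W E' C F h" for h
    using that assms(2,3) unfolding graph_hom_def by auto
  have ms: "map_sim V E F (h \<circ> q) (h' \<circ> q)" if "map_sim W E' F h h'" for h h'
    using that assms(2,3) unfolding map_sim_def by auto
  from assms(1) obtain N h where A: "\<forall>u\<in>W. h 0 u = f u" "\<forall>u\<in>W. h N u = g u"
    "\<forall>i\<le>N. graph_hom W E' C F (h i)" "\<forall>i<N. map_sim W E' F (h i) (h (Suc i))"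
    and hf: "graph_hom W E' C F f" and hg: "graph_hom W E' C F g"
    unfolding hom_homotopic_def by blast
  show ?thesis unfolding hom_homotopic_def
    apply (intro conjI gh[OF hf] gh[OF hg] exI[of _ N] exI[of _ "\<lambda>i. h i \<circ> q"])
    using A gh ms assms(2) by auto
qed

lemma hh_ext:
  assumes "hom_homotopic V1 E CA K_adj f g" "V1 \<subseteq> V"
    "\<forall>u\<in>V-V1. r u \<in> CB" "\<forall>u\<in>V-V1. \<forall>v\<in>V-V1. E u v \<longrightarrow> r u \<noteq> r v"
    "CA \<inter> CB = {}" "CA \<union> CB \<subseteq> C"
  shows "hom_homotopic V E C K_adj (\<lambda>u. if u \<in> V1 then f u else r u)
     (\<lambda>u. if u \<in> V1 then g u else r u)"
proof -
  let ?e = "\<lambda>h u. if u \<in> V1 then h u else r u"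
  have gh: "graph_hom V E C K_adj (?e h)" if h: "graph_hom V1 E CA K_adj h" for h
    unfolding graph_hom_def K_adj_def
  proof (intro conjI ballI impI)
    fix u assume "u \<in> V" thus "?e h u \<in> C" using h assms(3,6) unfolding graph_hom_def by auto
  next
    fix u v assume uv: "u \<in> V" "v \<in> V" "E u v"
    show "?e h u \<noteq> ?e h v"
    proof (cases "u \<in> V1"; cases "v \<in> V1")
      assume "u \<in> V1" "v \<in> V1" thus ?thesis using h uv unfolding graph_hom_def K_adj_def by auto
    next
      assume "u \<in> V1" "v \<notin> V1" thus ?thesis using h uv assms(3,5) unfolding graph_hom_def by (metis DiffI IntI empty_iff)
    next
      assume "u \<notin> V1" "v \<in> V1" thus ?thesis using h uv assms(3,5) unfolding graph_hom_def by (metis DiffI IntI empty_iff)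
    next
      assume "u \<notin> V1" "v \<notin> V1" thus ?thesis using uv assms(4) by auto
    qed
  qed
  have ms: "map_sim V E K_adj (?e h) (?e h')"
    if h: "graph_hom V1 E CA K_adj h" and h': "graph_hom V1 E CA K_adj h'"
      and s: "map_sim V1 E K_adj h h'" for h h'
    unfolding map_sim_def K_adj_def
  proof (intro ballI impI)
    fix u v assume uv: "u \<in> V" "v \<in> V" "E u v"
    show "?e h u \<noteq> ?e h' v"
    proof (cases "u \<in> V1"; cases "v \<in> V1")
      assume "u \<in> V1" "v \<in> V1" thus ?thesis using s uv unfolding map_sim_def K_adj_def by auto
    next
      assume "u \<in> V1" "v \<notin> V1" thus ?thesis using h uv assms(3,5) unfolding graph_hom_def by (metis DiffI IntI empty_iff)
    next
      assume "u \<notin> V1" "v \<in> V1" thus ?thesis using h' uv assms(3,5) unfolding graph_hom_def by (metis DiffI IntI empty_iff)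
    next
      assume "u \<notin> V1" "v \<notin> V1" thus ?thesis using uv assms(4) by auto
    qed
  qed
  from assms(1) obtain N h where A: "\<forall>u\<in>V1. h 0 u = f u" "\<forall>u\<in>V1. h N u = g u"
    "\<forall>i\<le>N. graph_hom V1 E CA K_adj (h i)" "\<forall>i<N. map_sim V1 E K_adj (h i) (h (Suc i))"
    and hf: "graph_hom V1 E CA K_adj f" and hg: "graph_hom V1 E CA K_adj g"
    unfolding hom_homotopic_def by blast
  show ?thesis unfolding hom_homotopic_def
    apply (intro conjI gh[OF hf] gh[OF hg] exI[of _ N] exI[of _ "\<lambda>i. ?e (h i)"])
    using A gh ms by auto
qed


section \<open>Combinatorics of semi-stable sets\<close>

definition nocons :: "nat set \<Rightarrow> bool" where
  "nocons S \<longleftrightarrow> (\<forall>i. i \<in> S \<longrightarrow> Suc i \<notin> S)"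

lemma nocons_subset: "nocons S \<Longrightarrow> T \<subseteq> S \<Longrightarrow> nocons T"
  unfolding nocons_def by blast

lemma nocons_bound:
  "finite S \<Longrightarrow> card S = Suc n \<Longrightarrow> nocons S \<Longrightarrow> Min S + 2*n \<le> Max S"
proof (induction n arbitrary: S)
  case 0
  then obtain x where "S = {x}" by (metis One_nat_def card_1_singletonE)
  thus ?case by simp
next
  case (Suc n)
  define M where "M = Max S"
  define S' where "S' = S - {M}"
  have ne: "S \<noteq> {}" using Suc.prems by auto
  have MS: "M \<in> S" using Suc.prems ne by (simp add: M_def)
  have cS': "card S' = Suc n" using Suc.prems MS by (simp add: S'_def card_Diff_singleton)
  have fS': "finite S'" using Suc.prems by (simp add: S'_def)
  have ne': "S' \<noteq> {}" using cS' by auto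
  have ncS': "nocons S'" using Suc.prems(3) by (rule nocons_subset) (auto simp: S'_def)
  have IH: "Min S' + 2*n \<le> Max S'" using Suc.IH[OF fS' cS' ncS'] .
  have "Max S' \<in> S'" using Max_in[OF fS' ne'] .
  hence m1: "Max S' \<in> S" "Max S' \<noteq> M" by (auto simp: S'_def)
  hence "Max S' < M" using Suc.prems(1) by (simp add: M_def order.not_eq_order_implies_strict)
  moreover have "Suc (Max S') \<noteq> M" using m1(1) MS Suc.prems(3) unfolding nocons_def by blast
  ultimately have "Max S' + 2 \<le> M" by linarith
  moreover have "Min S \<le> Min S'" using Min_antimono[of S' S] ne' Suc.prems(1) by (auto simp: S'_def)
  ultimately show ?case using IH by (simp add: M_def)
qed

lemma SG_props:
  assumes "S \<in> SG_verts n k" "n \<ge> 1"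
  shows "finite S" "S \<noteq> {}" "S \<subseteq> {..<2*n+k}" "nocons S" "card S = n"
    "Min S + 2*(n-1) \<le> Max S" "Max S < 2*n+k"
proof -
  have ss: "semi_stable (2*n+k) S" and c: "card S = n" using assms by (auto simp: SG_verts_def)
  show sub: "S \<subseteq> {..<2*n+k}" using ss by (simp add: semi_stable_def)
  show f: "finite S" using sub finite_subset by blast
  show ne: "S \<noteq> {}" using c assms(2) by auto
  show nc: "nocons S" unfolding nocons_def
  proof (intro allI impI)
    fix i assume "i \<in> S"
    show "Suc i \<notin> S"
    proof
      assume "Suc i \<in> S"
      hence "i + 2 \<le> 2*n+k" using sub by auto
      thus False using ss \<open>i \<in> S\<close> \<open>Suc i \<in> S\<close> unfolding semi_stable_def by auto
    qed
  qed
  show "card S = n" by (fact c)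
  show "Min S + 2*(n-1) \<le> Max S" using nocons_bound[OF f _ nc, of "n-1"] c assms(2) by simp
  show "Max S < 2*n+k" using sub f ne Max_in by blast
qed

lemma SG_min_le: "S \<in> SG_verts n k \<Longrightarrow> n \<ge> 1 \<Longrightarrow> Min S \<le> k+1"
  using SG_props[of S n k] by linarith

lemma SG_min_top: "S \<in> SG_verts n k \<Longrightarrow> n \<ge> 1 \<Longrightarrow> Min S = k+1 \<Longrightarrow> 2*n+k-1 \<in> S"
proof -
  assume a: "S \<in> SG_verts n k" "n \<ge> 1" "Min S = k+1"
  hence "Max S = 2*n+k-1" using SG_props[OF a(1,2)] by linarith
  thus ?thesis using SG_props[OF a(1,2)] Max_in by metis
qed

lemma disj_min: "finite S \<Longrightarrow> S \<noteq> {} \<Longrightarrow> finite T \<Longrightarrow> T \<noteq> {} \<Longrightarrow> S \<inter> T = {} \<Longrightarrow> Min S \<noteq> Min T"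
  by (metis Min_in disjoint_iff)

lemma c_hom:
  assumes "n \<ge> 1" shows "graph_hom (SG_verts n k) SG_adj (K_verts k) K_adj canon_col"
  unfolding graph_hom_def
proof (intro conjI ballI impI)
  fix u assume "u \<in> SG_verts n k"
  thus "canon_col u \<in> K_verts k" using SG_min_le[OF _ assms] by (simp add: canon_col_def K_verts_def)
next
  fix u v assume uv: "u \<in> SG_verts n k" "v \<in> SG_verts n k" "SG_adj u v"
  show "K_adj (canon_col u) (canon_col v)"
    unfolding K_adj_def canon_col_def
    by (rule disj_min) (use uv SG_props(1,2)[OF _ assms] in \<open>auto simp: SG_adj_def\<close>)
qed

section \<open>3-cycles\<close>

definition cyc3 :: "nat \<Rightarrow> nat \<Rightarrow> nat \<Rightarrow> nat \<Rightarrow> nat" where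
  "cyc3 a b d x = (if x = a then b else if x = b then d else if x = d then a else x)"

lemma cyc3_inj: "distinct [a,b,d] \<Longrightarrow> inj (cyc3 a b d)"
  by (auto simp: inj_def cyc3_def split: if_splits)

lemma cyc3_in: "a \<in> C \<Longrightarrow> b \<in> C \<Longrightarrow> d \<in> C \<Longrightarrow> x \<in> C \<Longrightarrow> cyc3 a b d x \<in> C"
  by (simp add: cyc3_def)

lemma cyc3_rot: "cyc3 a b d = cyc3 b d a" if "distinct [a,b,d]"
  using that by (auto simp: cyc3_def fun_eq_iff)

lemma cyc3_split: "distinct [a,b,d,v] \<Longrightarrow> cyc3 a b d = cyc3 a b v \<circ> cyc3 b d v"
  by (auto simp: cyc3_def fun_eq_iff)

lemma cyc3_transp: "distinct [a,b,d] \<Longrightarrow> cyc3 a b d = transpose a b \<circ> transpose b d"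
  by (auto simp: cyc3_def fun_eq_iff transpose_def)

lemma cyc3_even: "distinct [a,b,d] \<Longrightarrow> evenperm (cyc3 a b d)"
  by (simp add: cyc3_transp evenperm_comp permutation_swap_id evenperm_swap)

lemma cyc3_permutes: "distinct [a,b,d] \<Longrightarrow> a \<in> C \<Longrightarrow> b \<in> C \<Longrightarrow> d \<in> C \<Longrightarrow> cyc3 a b d permutes C"
  by (simp add: cyc3_transp permutes_compose permutes_swap_id)

lemma cyc_c_hom:
  assumes "n \<ge> 1" "distinct [a,b,d]" "a \<in> K_verts k" "b \<in> K_verts k" "d \<in> K_verts k"
  shows "graph_hom (SG_verts n k) SG_adj (K_verts k) K_adj (cyc3 a b d \<circ> canon_col)"
proof -
  have "hom_homotopic (SG_verts n k) SG_adj (K_verts k) K_adj (cyc3 a b d \<circ> canon_col) (cyc3 a b d \<circ> canon_col)"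
    by (rule hh_comp[OF hh_refl[OF c_hom[OF assms(1)]]])
       (use assms inj_on_subset[OF cyc3_inj[OF assms(2)] subset_UNIV] cyc3_in in auto)
  thus ?thesis by (rule hh_homs)
qed

definition Q :: "nat \<Rightarrow> nat \<Rightarrow> bool" where
  "Q n k \<longleftrightarrow> (\<forall>a b d. distinct [a,b,d] \<and> a \<le> k+1 \<and> b \<le> k+1 \<and> d \<le> k+1 \<longrightarrow>
      hom_homotopic (SG_verts n k) SG_adj (K_verts k) K_adj canon_col (cyc3 a b d \<circ> canon_col))"


lemma cyc3_fix: "x \<noteq> a \<Longrightarrow> x \<noteq> b \<Longrightarrow> x \<noteq> d \<Longrightarrow> cyc3 a b d x = x"
  by (simp add: cyc3_def)

lemma cyc3_eq_fix: "distinct [a,b,d] \<Longrightarrow> y \<noteq> a \<Longrightarrow> y \<noteq> b \<Longrightarrow> y \<noteq> d \<Longrightarrow> cyc3 a b d x = y \<Longrightarrow> x = y"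
  by (auto simp: cyc3_def split: if_splits)

lemma SG_mono: "S \<in> SG_verts n j \<Longrightarrow> S \<in> SG_verts n (Suc j)"
  unfolding SG_verts_def semi_stable_def by auto

lemma SG_down: "S \<in> SG_verts n (Suc j) \<Longrightarrow> 2*n+j \<notin> S \<Longrightarrow> S \<in> SG_verts n j"
  unfolding SG_verts_def semi_stable_def
proof (elim CollectE conjE, intro CollectI conjI allI impI)
  assume "S \<subseteq> {..<2*n+Suc j}" "2*n+j \<notin> S"
  thus "S \<subseteq> {..<2*n+j}" by (auto simp: less_Suc_eq)
next
  fix i assume "S \<subseteq> {..<2*n+Suc j}" "\<forall>i. i + 2 \<le> 2 * n + Suc j \<longrightarrow> \<not> {i, i + 1} \<subseteq> S"
    "i + 2 \<le> 2*n+j"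
  thus "\<not> {i, i + 1} \<subseteq> S" by auto
qed auto

lemma top_case:
  assumes n: "n \<ge> 2" and IH: "Q n j" and dst: "distinct [a,b,d]"
    and ab: "a \<le> j+1" "b \<le> j+1" "d \<le> j+1"
  shows "hom_homotopic (SG_verts n (Suc j)) SG_adj (K_verts (Suc j)) K_adj canon_col (cyc3 a b d \<circ> canon_col)"
proof -
  let ?V = "SG_verts n (Suc j)" and ?V1 = "SG_verts n j" and ?M = "2*n+j"
  let ?C = "K_verts (Suc j)"
  have n1: "n \<ge> 1" using n by simp
  have V1V: "?V1 \<subseteq> ?V" using SG_mono by blast
  have topM: "?M \<in> S" if "S \<in> ?V - ?V1" for S using that SG_down by blast
  have minV1: "Min S \<le> j+1" if "S \<in> ?V1" for S using SG_min_le[OF that n1] .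
  have mintop: "Min S = j+2 \<Longrightarrow> ?M \<in> S" if "S \<in> ?V" for S
    using SG_min_top[OF that n1] by simp
  have props: "finite S" "S \<noteq> {}" if "S \<in> ?V" for S using SG_props[OF that n1] by auto
  have cyc_top: "cyc3 a b d x = j+2 \<Longrightarrow> x = j+2" for x
    using cyc3_eq_fix[OF dst, of "j+2" x] ab by auto
  define g1 where "g1 S = (if S \<in> ?V1 then canon_col S else j+2)" for S
  define g2 where "g2 S = (if S \<in> ?V1 then (cyc3 a b d \<circ> canon_col) S else j+2)" for S
  have chom: "graph_hom ?V SG_adj ?C K_adj canon_col" by (rule c_hom[OF n1])
  have cychom: "graph_hom ?V SG_adj ?C K_adj (cyc3 a b d \<circ> canon_col)"
    by (rule cyc_c_hom[OF n1 dst]) (use ab in \<open>auto simp: K_verts_def\<close>)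
  have B: "hom_homotopic ?V SG_adj ?C K_adj g1 g2"
    unfolding g1_def g2_def
  proof (rule hh_ext[where CA = "K_verts j" and CB = "{j+2}"])
    show "hom_homotopic ?V1 SG_adj (K_verts j) K_adj canon_col (cyc3 a b d \<circ> canon_col)"
      using IH dst ab unfolding Q_def by blast
    show "?V1 \<subseteq> ?V" by (fact V1V)
    show "\<forall>u\<in>?V - ?V1. \<forall>v\<in>?V - ?V1. SG_adj u v \<longrightarrow> j + 2 \<noteq> j + 2"
      using topM by (auto simp: SG_adj_def)
  qed (auto simp: K_verts_def)
  have A: "hom_homotopic ?V SG_adj ?C K_adj canon_col g1"
  proof (rule hh_step[OF chom hh_homs(1)[OF B]])
    show "map_sim ?V SG_adj K_adj canon_col g1"
      unfolding map_sim_def K_adj_def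
    proof (intro ballI impI)
      fix S T assume ST: "S \<in> ?V" "T \<in> ?V" "SG_adj S T"
      show "canon_col S \<noteq> g1 T"
      proof (cases "T \<in> ?V1")
        case True
        thus ?thesis using disj_min[OF props(1)[OF ST(1)] props(2)[OF ST(1)] props(1)[OF ST(2)] props(2)[OF ST(2)]] ST(3)
          unfolding g1_def canon_col_def SG_adj_def by auto
      next
        case False
        hence "?M \<in> T" using topM ST by blast
        moreover have "canon_col S = j+2 \<Longrightarrow> ?M \<in> S" using mintop ST by (simp add: canon_col_def)
        ultimately show ?thesis using ST False unfolding g1_def SG_adj_def by auto
      qed
    qed
  qed
  have C: "hom_homotopic ?V SG_adj ?C K_adj g2 (cyc3 a b d \<circ> canon_col)"
  proof (rule hh_step[OF hh_homs(2)[OF B] cychom])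
    show "map_sim ?V SG_adj K_adj g2 (cyc3 a b d \<circ> canon_col)"
      unfolding map_sim_def K_adj_def
    proof (intro ballI impI)
      fix S T assume ST: "S \<in> ?V" "T \<in> ?V" "SG_adj S T"
      show "g2 S \<noteq> (cyc3 a b d \<circ> canon_col) T"
      proof (cases "S \<in> ?V1")
        case True
        have "canon_col S \<noteq> canon_col T"
          using disj_min[OF props(1)[OF ST(1)] props(2)[OF ST(1)] props(1)[OF ST(2)] props(2)[OF ST(2)]] ST(3)
          unfolding canon_col_def SG_adj_def by auto
        thus ?thesis using True cyc3_inj[OF dst] unfolding g2_def by (auto dest: injD)
      next
        case False
        hence "?M \<in> S" using topM ST by blast
        moreover have "cyc3 a b d (canon_col T) = j+2 \<Longrightarrow> ?M \<in> T"
          using mintop ST cyc_top by (simp add: canon_col_def)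
        ultimately show ?thesis using ST False unfolding g2_def SG_adj_def by auto
      qed
    qed
  qed
  show ?thesis using hh_trans[OF hh_trans[OF A B] C] .
qed


lemma shift_props:
  assumes S: "S \<in> SG_verts n (Suc j)" "0 \<notin> S" and n1: "n \<ge> 1"
  shows "(\<lambda>x. x - 1) ` S \<in> SG_verts n j"
    "Suc (Min ((\<lambda>x. x - 1) ` S)) = Min S"
proof -
  have ss: "semi_stable (2*n + Suc j) S" "card S = n" using S by (auto simp: SG_verts_def)
  have pos: "x \<ge> 1" if "x \<in> S" for x using that S(2) by (cases x) auto
  have inj: "inj_on (\<lambda>x. x - 1) S" using pos by (auto simp: inj_on_def) (metis One_nat_def Suc_pred le_simps(3) not_less0 diff_Suc_1)
  have sub: "S \<subseteq> {..<2*n + Suc j}" using ss by (simp add: semi_stable_def)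
  have "semi_stable (2*n+j) ((\<lambda>x. x - 1) ` S)"
    unfolding semi_stable_def
  proof (intro conjI allI impI)
    show "(\<lambda>x. x - 1) ` S \<subseteq> {..<2*n+j}" using sub pos by force
  next
    fix i assume i: "i + 2 \<le> 2*n+j"
    show "\<not> {i, i+1} \<subseteq> (\<lambda>x. x - 1) ` S"
    proof
      assume "{i, i+1} \<subseteq> (\<lambda>x. x - 1) ` S"
      then obtain x y where xy: "x \<in> S" "y \<in> S" "i = x - 1" "i + 1 = y - 1" by auto
      hence "x = i+1" "y = i+2" using pos by force+
      hence "{i+1, i+1+1} \<subseteq> S" using xy by auto
      moreover have "i + 1 + 2 \<le> 2*n + Suc j" using i by simp
      ultimately show False using ss(1) unfolding semi_stable_def by blast
    qed
  qed
  thus "(\<lambda>x. x - 1) ` S \<in> SG_verts n j" using card_image[OF inj] ss(2) by (simp add: SG_verts_def)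
  have f: "finite S" "S \<noteq> {}" using SG_props[OF S(1) n1] by auto
  have "(\<lambda>x. x - 1) (Min S) = Min ((\<lambda>x. x - 1) ` S)"
    by (rule mono_Min_commute[OF _ f]) (auto simp: mono_def)
  moreover have "Min S \<ge> 1" using pos f Min_in by blast
  ultimately show "Suc (Min ((\<lambda>x. x - 1) ` S)) = Min S" by simp
qed

lemma cyc3_shift: "1 \<le> a \<Longrightarrow> 1 \<le> b \<Longrightarrow> 1 \<le> d \<Longrightarrow> 1 \<le> x \<Longrightarrow>
  Suc (cyc3 (a-1) (b-1) (d-1) (x-1)) = cyc3 a b d x"
  unfolding cyc3_def by (cases x; cases a; cases b; cases d) auto

lemma bottom_case:
  assumes n: "n \<ge> 2" and IH: "Q n j" and dst: "distinct [a,b,d]"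
    and ab: "1 \<le> a" "1 \<le> b" "1 \<le> d" "a \<le> j+2" "b \<le> j+2" "d \<le> j+2"
  shows "hom_homotopic (SG_verts n (Suc j)) SG_adj (K_verts (Suc j)) K_adj canon_col (cyc3 a b d \<circ> canon_col)"
proof -
  let ?V = "SG_verts n (Suc j)" and ?W = "SG_verts n j"
  let ?V1 = "{S \<in> ?V. 0 \<notin> S}"
  let ?C = "K_verts (Suc j)"
  let ?q = "\<lambda>S. (\<lambda>x. x - 1) ` S"
  let ?c' = "cyc3 (a-1) (b-1) (d-1)"
  have n1: "n \<ge> 1" using n by simp
  have dst': "distinct [a-1, b-1, d-1]" using dst ab by auto
  have H1: "hom_homotopic ?W SG_adj (K_verts j) K_adj canon_col (?c' \<circ> canon_col)"
  proof -
    have "\<forall>a b d. distinct [a,b,d] \<and> a \<le> j+1 \<and> b \<le> j+1 \<and> d \<le> j+1 \<longrightarrow>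
      hom_homotopic ?W SG_adj (K_verts j) K_adj canon_col (cyc3 a b d \<circ> canon_col)"
      using IH unfolding Q_def by blast
    from spec[OF spec[OF spec[OF this, of "a-1"], of "b-1"], of "d-1"]
    show ?thesis using dst' ab by auto
  qed
  have H2: "hom_homotopic ?W SG_adj {1..j+2} K_adj (Suc \<circ> canon_col) (Suc \<circ> (?c' \<circ> canon_col))"
    by (rule hh_comp[OF H1]) (auto simp: K_verts_def)
  have H3: "hom_homotopic ?V1 SG_adj {1..j+2} K_adj ((Suc \<circ> canon_col) \<circ> ?q) ((Suc \<circ> (?c' \<circ> canon_col)) \<circ> ?q)"
  proof (rule hh_pull[OF H2])
    show "\<forall>u\<in>?V1. ?q u \<in> ?W" using shift_props(1) n1 by blast
    show "\<forall>u\<in>?V1. \<forall>v\<in>?V1. SG_adj u v \<longrightarrow> SG_adj (?q u) (?q v)"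
    proof (intro ballI impI)
      fix u v assume uv: "u \<in> ?V1" "v \<in> ?V1" "SG_adj u v"
      show "SG_adj (?q u) (?q v)" unfolding SG_adj_def
      proof (rule ccontr)
        assume "?q u \<inter> ?q v \<noteq> {}"
        then obtain x y where "x \<in> u" "y \<in> v" "x - 1 = y - 1" by blast
        moreover have "0 \<notin> u" "0 \<notin> v" using uv(1,2) by simp_all
        hence "x \<noteq> 0" "y \<noteq> 0" using \<open>x \<in> u\<close> \<open>y \<in> v\<close> by (metis, metis)
        ultimately have "x = y" by simp
        thus False using uv \<open>x \<in> u\<close> \<open>y \<in> v\<close> by (auto simp: SG_adj_def)
      qed
    qed
  qed
  have H4: "hom_homotopic ?V1 SG_adj {1..j+2} K_adj canon_col (cyc3 a b d \<circ> canon_col)"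
  proof (rule hh_cong[OF H3])
    show "\<forall>u\<in>?V1. ((Suc \<circ> canon_col) \<circ> ?q) u = canon_col u"
    proof
      fix u assume u: "u \<in> ?V1"
      show "((Suc \<circ> canon_col) \<circ> ?q) u = canon_col u"
        unfolding canon_col_def comp_def by (rule shift_props(2)) (use u n1 in auto)
    qed
    show "\<forall>u\<in>?V1. ((Suc \<circ> (?c' \<circ> canon_col)) \<circ> ?q) u = (cyc3 a b d \<circ> canon_col) u"
    proof
      fix u assume u: "u \<in> ?V1"
      have s: "Suc (Min (?q u)) = Min u" by (rule shift_props(2)) (use u n1 in auto)
      hence e: "Min (?q u) = Min u - 1" "Min u \<ge> 1" by linarith+
      show "((Suc \<circ> (?c' \<circ> canon_col)) \<circ> ?q) u = (cyc3 a b d \<circ> canon_col) u"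
        unfolding canon_col_def comp_def e(1) by (rule cyc3_shift[OF ab(1-3) e(2)])
    qed
  qed
  have H5: "hom_homotopic ?V SG_adj ?C K_adj (\<lambda>u. if u \<in> ?V1 then canon_col u else 0)
     (\<lambda>u. if u \<in> ?V1 then (cyc3 a b d \<circ> canon_col) u else 0)"
    by (rule hh_ext[OF H4, where CB = "{0}"]) (auto simp: SG_adj_def K_verts_def)
  show ?thesis
  proof (rule hh_cong[OF H5])
    have "canon_col u = 0" if "u \<in> ?V" "0 \<in> u" for u
      using that SG_props[OF that(1) n1] unfolding canon_col_def
      by (metis Min_le le_zero_eq)
    thus "\<forall>u\<in>?V. (if u \<in> ?V1 then canon_col u else 0) = canon_col u" by auto
    show "\<forall>u\<in>?V. (if u \<in> ?V1 then (cyc3 a b d \<circ> canon_col) u else 0) = (cyc3 a b d \<circ> canon_col) u"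
      using \<open>\<And>u. u \<in> ?V \<Longrightarrow> 0 \<in> u \<Longrightarrow> canon_col u = 0\<close> ab by (auto simp: cyc3_def)
  qed
qed


lemma easy_case:
  assumes n: "n \<ge> 2" and IH: "Q n j" and dst: "distinct [x,y,z]"
    and le: "x \<le> j+2" "y \<le> j+2" "z \<le> j+2"
    and avoid: "(0 \<noteq> x \<and> 0 \<noteq> y \<and> 0 \<noteq> z) \<or> (j+2 \<noteq> x \<and> j+2 \<noteq> y \<and> j+2 \<noteq> z)"
  shows "hom_homotopic (SG_verts n (Suc j)) SG_adj (K_verts (Suc j)) K_adj canon_col (cyc3 x y z \<circ> canon_col)"
proof (cases "0 \<noteq> x \<and> 0 \<noteq> y \<and> 0 \<noteq> z")
  case True
  thus ?thesis by (intro bottom_case[OF n IH dst]) (use le in auto)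
next
  case False
  hence "j+2 \<noteq> x \<and> j+2 \<noteq> y \<and> j+2 \<noteq> z" using avoid by blast
  thus ?thesis by (intro top_case[OF n IH dst]) (use le in auto)
qed

lemma hard_case:
  assumes n: "n \<ge> 2" and j: "j \<ge> 1" and IH: "Q n j" and dst: "distinct [x,y,z]"
    and le: "y \<le> j+2" and xz: "(x = 0 \<and> z = j+2) \<or> (x = j+2 \<and> z = 0)"
  shows "hom_homotopic (SG_verts n (Suc j)) SG_adj (K_verts (Suc j)) K_adj canon_col (cyc3 x y z \<circ> canon_col)"
proof -
  define v where "v = (if y = 1 then 2 else (1::nat))"
  have dv: "distinct [x,y,z,v]" using dst xz j by (auto simp: v_def)
  have d1: "distinct [x,y,v]" and d2: "distinct [y,z,v]" using dv by auto
  have vle: "v \<le> j+2" using j by (auto simp: v_def)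
  have E1: "hom_homotopic (SG_verts n (Suc j)) SG_adj (K_verts (Suc j)) K_adj canon_col (cyc3 x y v \<circ> canon_col)"
    by (rule easy_case[OF n IH d1]) (use xz le vle dv in auto)
  have E2: "hom_homotopic (SG_verts n (Suc j)) SG_adj (K_verts (Suc j)) K_adj canon_col (cyc3 y z v \<circ> canon_col)"
    by (rule easy_case[OF n IH d2]) (use xz le vle dv in auto)
  have E3: "hom_homotopic (SG_verts n (Suc j)) SG_adj (K_verts (Suc j)) K_adj (cyc3 x y v \<circ> canon_col)
      (cyc3 x y v \<circ> (cyc3 y z v \<circ> canon_col))"
  proof (rule hh_comp[OF E2 inj_on_subset[OF cyc3_inj[OF d1] subset_UNIV]])
    have "x \<le> j+2" using xz by auto
    thus "cyc3 x y v ` K_verts (Suc j) \<subseteq> K_verts (Suc j)"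
      using le vle by (auto simp: K_verts_def cyc3_def)
  qed
  have "cyc3 x y v \<circ> (cyc3 y z v \<circ> canon_col) = cyc3 x y z \<circ> canon_col"
    using cyc3_split[OF dv] by (simp add: o_assoc)
  thus ?thesis using hh_trans[OF E1 E3] by simp
qed

lemma Q_step:
  assumes n: "n \<ge> 2" and j: "j \<ge> 1" and IH: "Q n j"
  shows "Q n (Suc j)"
  unfolding Q_def
proof (intro allI impI, elim conjE)
  fix a b d assume dst: "distinct [a,b,d]" and le: "a \<le> Suc j + 1" "b \<le> Suc j + 1" "d \<le> Suc j + 1"
  let ?G = "\<lambda>f. hom_homotopic (SG_verts n (Suc j)) SG_adj (K_verts (Suc j)) K_adj canon_col (f \<circ> canon_col)"
  have r1: "cyc3 a b d = cyc3 b d a" by (rule cyc3_rot[OF dst])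
  have r2: "cyc3 b d a = cyc3 d a b" by (rule cyc3_rot) (use dst in auto)
  show "?G (cyc3 a b d)"
  proof (cases "(0 \<noteq> a \<and> 0 \<noteq> b \<and> 0 \<noteq> d) \<or> (j+2 \<noteq> a \<and> j+2 \<noteq> b \<and> j+2 \<noteq> d)")
    case True
    thus ?thesis by (intro easy_case[OF n IH dst]) (use le in auto)
  next
    case False
    hence both: "0 \<in> {a,b,d}" "j+2 \<in> {a,b,d}" by auto
    consider "(a = 0 \<and> d = j+2) \<or> (a = j+2 \<and> d = 0)" | "(b = 0 \<and> a = j+2) \<or> (b = j+2 \<and> a = 0)"
      | "(d = 0 \<and> b = j+2) \<or> (d = j+2 \<and> b = 0)"
      using both dst by auto
    thus ?thesis
    proof cases
      case 1 thus ?thesis by (intro hard_case[OF n j IH dst]) (use le in auto)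
    next
      case 2
      have "?G (cyc3 b d a)" by (intro hard_case[OF n j IH]) (use dst le 2 in auto)
      thus ?thesis using r1 by simp
    next
      case 3
      have "?G (cyc3 d a b)" by (intro hard_case[OF n j IH]) (use dst le 3 in auto)
      thus ?thesis using r1 r2 by simp
    qed
  qed
qed


section \<open>Base case k = 1\<close>

definition VP :: "(nat \<times> nat) set" where
  "VP = {(0,2),(0,3),(0,4),(1,3),(1,4),(2,4)}"

definition EP :: "nat \<times> nat \<Rightarrow> nat \<times> nat \<Rightarrow> bool" where
  "EP p q \<longleftrightarrow> fst p \<noteq> fst q \<and> fst p \<noteq> snd q \<and> snd p \<noteq> fst q \<and> snd p \<noteq> snd q"

definition hP :: "nat \<Rightarrow> nat \<times> nat \<Rightarrow> nat" where
  "hP i p = (if i = 0 then fst p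
     else if p = (1,4) then 2
     else if p = (0,3) \<and> i \<ge> 2 then 1
     else if p = (2,4) \<and> i \<ge> 3 then 0
     else if p = (1,3) \<and> i \<ge> 4 then 2
     else if p = (0,2) \<and> i \<ge> 5 then 1
     else if p = (0,4) \<and> i \<ge> 6 then 1
     else fst p)"

lemma hP_hom: "i \<le> 6 \<Longrightarrow> graph_hom VP EP {0..2} K_adj (hP i)"
proof -
  assume "i \<le> 6"
  hence "i = 0 \<or> i = 1 \<or> i = 2 \<or> i = 3 \<or> i = 4 \<or> i = 5 \<or> i = 6" by linarith
  thus ?thesis by (elim disjE) (simp_all add: graph_hom_def VP_def EP_def K_adj_def hP_def)
qed

lemma hP_sim: "i < 6 \<Longrightarrow> map_sim VP EP K_adj (hP i) (hP (Suc i))"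
proof -
  assume "i < 6"
  hence "i = 0 \<or> i = 1 \<or> i = 2 \<or> i = 3 \<or> i = 4 \<or> i = 5" by linarith
  thus ?thesis by (elim disjE) (simp_all add: map_sim_def VP_def EP_def K_adj_def hP_def)
qed

lemma base_pair: "hom_homotopic VP EP {0..2} K_adj fst (cyc3 0 1 2 \<circ> fst)"
proof -
  have t1: "graph_hom VP EP {0..2} K_adj (cyc3 0 1 2 \<circ> fst)"
    by (simp add: graph_hom_def VP_def EP_def K_adj_def cyc3_def)
  have t2: "\<forall>u\<in>VP. hP 6 u = (cyc3 0 1 2 \<circ> fst) u" by (simp add: hP_def VP_def cyc3_def)
  have t3: "graph_hom VP EP {0..2} K_adj fst" by (rule graph_hom_cong[OF hP_hom[of 0]]) (simp_all add: hP_def)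
  have t4: "\<forall>u\<in>VP. hP 0 u = fst u" by (simp add: hP_def)
  have t5: "\<forall>i\<le>6. graph_hom VP EP {0..2} K_adj (hP i)" using hP_hom by blast
  have t6: "\<forall>i<6. map_sim VP EP K_adj (hP i) (hP (Suc i))" using hP_sim by blast
  have "\<exists>N::nat. \<exists>h :: nat \<Rightarrow> nat \<times> nat \<Rightarrow> nat.
        (\<forall>u\<in>VP. h 0 u = fst u) \<and> (\<forall>u\<in>VP. h N u = (cyc3 0 1 2 \<circ> fst) u) \<and>
        (\<forall>i\<le>N. graph_hom VP EP {0..2} K_adj (h i)) \<and>
        (\<forall>i<N. map_sim VP EP K_adj (h i) (h (Suc i)))"
    apply (rule exI[where x="6::nat"])
    apply (rule exI[where x=hP])
    using t2 t4 t5 t6 by (intro conjI)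
  thus ?thesis unfolding hom_homotopic_def using t1 t3 by (intro conjI)
qed

definition psi2 :: "nat set \<Rightarrow> nat \<times> nat" where
  "psi2 S = (Min S, Min (S - {Min S}))"

lemma pair_VP: "a + 2 \<le> b \<Longrightarrow> b \<le> (4::nat) \<Longrightarrow> (a,b) \<in> VP"
proof -
  assume ab: "a + 2 \<le> b" "b \<le> 4"
  hence "a = 0 \<or> a = 1 \<or> a = 2" "b = 2 \<or> b = 3 \<or> b = 4" by linarith+
  thus ?thesis using ab by (auto simp: VP_def)
qed

lemma psi2_props:
  assumes S: "S \<in> SG_verts n 1" and n: "n \<ge> 2"
  shows "psi2 S \<in> VP" "fst (psi2 S) \<in> S" "snd (psi2 S) \<in> S"
proof -
  have n1: "n \<ge> 1" using n by simp
  note P = SG_props[OF S n1]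
  define a where "a = Min S"
  define S' where "S' = S - {a}"
  have aS: "a \<in> S" using P by (simp add: a_def)
  have fS': "finite S'" using P by (simp add: S'_def)
  have cS': "card S' = Suc (n - 2)" using P aS n by (simp add: S'_def card_Diff_singleton)
  hence ne': "S' \<noteq> {}" by auto
  have nc': "nocons S'" using P(4) by (rule nocons_subset) (auto simp: S'_def)
  define b where "b = Min S'"
  have bS': "b \<in> S'" using fS' ne' by (simp add: b_def)
  hence bS: "b \<in> S" "b \<noteq> a" by (auto simp: S'_def)
  have "a \<le> b" using P bS by (simp add: a_def)
  moreover have "Suc a \<noteq> b" using P(4) aS bS unfolding nocons_def by blast
  ultimately have ab: "a + 2 \<le> b" using bS by linarith
  have "b + 2*(n-2) \<le> Max S'" using nocons_bound[OF fS' cS' nc'] by (simp add: b_def)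
  moreover have "Max S' \<le> Max S" using fS' ne' P by (auto simp: S'_def intro!: Max_mono)
  ultimately have "b \<le> 4" using P(7) n by linarith
  hence "(a,b) \<in> VP" using ab pair_VP by blast
  moreover have "psi2 S = (a,b)" by (simp add: psi2_def a_def b_def S'_def)
  ultimately show "psi2 S \<in> VP" "fst (psi2 S) \<in> S" "snd (psi2 S) \<in> S" using aS bS by auto
qed

lemma base_sigma:
  assumes n: "n \<ge> 2"
  shows "hom_homotopic (SG_verts n 1) SG_adj (K_verts 1) K_adj canon_col (cyc3 0 1 2 \<circ> canon_col)"
proof -
  have "hom_homotopic (SG_verts n 1) SG_adj {0..2} K_adj (fst \<circ> psi2) ((cyc3 0 1 2 \<circ> fst) \<circ> psi2)"
  proof (rule hh_pull[OF base_pair])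
    show "\<forall>u\<in>SG_verts n 1. psi2 u \<in> VP" using psi2_props(1) n by blast
    show "\<forall>u\<in>SG_verts n 1. \<forall>v\<in>SG_verts n 1. SG_adj u v \<longrightarrow> EP (psi2 u) (psi2 v)"
    proof (intro ballI impI)
      fix u v assume uv: "u \<in> SG_verts n 1" "v \<in> SG_verts n 1" "SG_adj u v"
      have D: "x \<noteq> y" if "x \<in> u" "y \<in> v" for x y
        using uv(3) that unfolding SG_adj_def by blast
      have m: "fst (psi2 u) \<in> u" "snd (psi2 u) \<in> u" "fst (psi2 v) \<in> v" "snd (psi2 v) \<in> v"
        using psi2_props(2,3)[OF uv(1) n] psi2_props(2,3)[OF uv(2) n] by auto
      show "EP (psi2 u) (psi2 v)" unfolding EP_def
        by (intro conjI D m)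
    qed
  qed
  moreover have "K_verts 1 = {0..2}" by (simp add: K_verts_def)
  ultimately have H: "hom_homotopic (SG_verts n 1) SG_adj (K_verts 1) K_adj (fst \<circ> psi2) ((cyc3 0 1 2 \<circ> fst) \<circ> psi2)"
    by simp
  show ?thesis by (rule hh_cong[OF H]) (simp_all add: psi2_def canon_col_def)
qed

lemma cyc3_021: "cyc3 0 2 1 = cyc3 0 1 2 \<circ> cyc3 0 1 2"
  by (auto simp: fun_eq_iff cyc3_def)

lemma Q_base:
  assumes n: "n \<ge> 2" shows "Q n 1"
  unfolding Q_def
proof (intro allI impI, elim conjE)
  fix a b d :: nat assume dst: "distinct [a,b,d]" and le: "a \<le> 1 + 1" "b \<le> 1 + 1" "d \<le> 1 + 1"
  let ?G = "\<lambda>f. hom_homotopic (SG_verts n 1) SG_adj (K_verts 1) K_adj canon_col (f \<circ> canon_col)"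
  have s1: "?G (cyc3 0 1 2)" by (rule base_sigma[OF n])
  have "hom_homotopic (SG_verts n 1) SG_adj (K_verts 1) K_adj (cyc3 0 1 2 \<circ> canon_col)
     (cyc3 0 1 2 \<circ> (cyc3 0 1 2 \<circ> canon_col))"
    by (rule hh_comp[OF s1]) (auto simp: K_verts_def cyc3_def inj_on_def)
  from hh_trans[OF s1 this] have "?G (cyc3 0 1 2 \<circ> cyc3 0 1 2)" by (simp only: o_assoc)
  hence s2: "?G (cyc3 0 2 1)" by (simp only: cyc3_021)
  have r1: "cyc3 a b d = cyc3 b d a" by (rule cyc3_rot[OF dst])
  have r2: "cyc3 b d a = cyc3 d a b" by (rule cyc3_rot) (use dst in auto)
  have "(a = 0 \<and> b = 1 \<and> d = 2) \<or> (a = 0 \<and> b = 2 \<and> d = 1) \<or> (b = 0 \<and> d = 1 \<and> a = 2) \<or>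
        (b = 0 \<and> d = 2 \<and> a = 1) \<or> (d = 0 \<and> a = 1 \<and> b = 2) \<or> (d = 0 \<and> a = 2 \<and> b = 1)"
  proof -
    have A: "a = 0 \<or> a = 1 \<or> a = 2" and B: "b = 0 \<or> b = 1 \<or> b = 2"
      and D: "d = 0 \<or> d = 1 \<or> d = 2" using le by linarith+
    have dd: "a \<noteq> b" "a \<noteq> d" "b \<noteq> d" using dst by auto
    show ?thesis using A B D dd by (elim disjE; simp)
  qed
  thus "?G (cyc3 a b d)"
  proof (elim disjE conjE)
    assume "a = 0" "b = 1" "d = 2" thus ?thesis using s1 by simp
  next
    assume "a = 0" "b = 2" "d = 1" thus ?thesis using s2 by simp
  next
    assume "b = 0" "d = 1" "a = 2" thus ?thesis using s1 r1 by simp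
  next
    assume "b = 0" "d = 2" "a = 1" thus ?thesis using s2 r1 by simp
  next
    assume "d = 0" "a = 1" "b = 2" thus ?thesis using s1 r1 r2 by simp
  next
    assume "d = 0" "a = 2" "b = 1" thus ?thesis using s2 r1 r2 by simp
  qed
qed

lemma Q_all: assumes n: "n \<ge> 2" and k: "k \<ge> 1" shows "Q n k"
  using k
proof (induction k rule: nat_induct_at_least)
  case base thus ?case using Q_base[OF n] by simp
next
  case (Suc k) thus ?case using Q_step[OF n] by simp
qed


section \<open>Even permutations\<close>

lemma cyc3_inv: "distinct [a,b,d] \<Longrightarrow> cyc3 a d b \<circ> cyc3 a b d = id"
  by (auto simp: fun_eq_iff cyc3_def)

lemma even_main:
  assumes n: "n \<ge> 2" and k: "k \<ge> 1"
  shows "\<forall>p. p permutes K_verts k \<longrightarrow> evenperm p \<longrightarrow> card {x. p x \<noteq> x} = N \<longrightarrow>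
    hom_homotopic (SG_verts n k) SG_adj (K_verts k) K_adj canon_col (p \<circ> canon_col)"
proof (induction N rule: less_induct)
  case (less N)
  let ?C = "K_verts k"
  let ?G = "\<lambda>f. hom_homotopic (SG_verts n k) SG_adj ?C K_adj canon_col (f \<circ> canon_col)"
  have Qk: "Q n k" using Q_all[OF n k] .
  have n1: "n \<ge> 1" using n by simp
  have finC: "finite ?C" by (simp add: K_verts_def)
  have cyc: "?G (cyc3 x y z)" if "distinct [x,y,z]" "x \<in> ?C" "y \<in> ?C" "z \<in> ?C" for x y z
  proof -
    have "distinct [x,y,z] \<and> x \<le> k+1 \<and> y \<le> k+1 \<and> z \<le> k+1" using that by (simp add: K_verts_def)
    thus ?thesis using Qk unfolding Q_def by blast
  qed
  show ?case
  proof (intro allI impI)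
    fix p assume pp: "p permutes ?C" and ev: "evenperm p" and cN: "card {x. p x \<noteq> x} = N"
    let ?F = "{x. p x \<noteq> x}"
    have FC: "?F \<subseteq> ?C"
    proof
      fix x assume "x \<in> ?F"
      hence "p x \<noteq> x" by simp
      thus "x \<in> ?C" using permutes_not_in[OF pp, of x] by blast
    qed
    have finF: "finite ?F" using finite_subset[OF FC finC] .
    have injp: "inj p" using pp by (rule permutes_inj)
    show "?G p"
    proof (cases "\<forall>x. p x = x")
      case True
      hence "p = id" by (simp add: fun_eq_iff)
      thus ?thesis using hh_refl[OF c_hom[OF n1]] by simp
    next
      case False
      then obtain a where pa: "p a \<noteq> a" by blast
      define b where "b = p a"
      have aC: "a \<in> ?C" using pa FC by blast
      have bC: "b \<in> ?C" using aC pp by (simp add: b_def permutes_in_image)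
      have ab: "a \<noteq> b" using pa by (simp add: b_def)
      have pb: "p b \<noteq> b"
      proof
        assume "p b = b"
        hence "p a = p b" by (simp add: b_def)
        hence "a = b" by (rule injD[OF injp])
        thus False using ab by simp
      qed
      show ?thesis
      proof (cases "\<exists>d. p d \<noteq> d \<and> d \<noteq> a \<and> d \<noteq> b")
        case True
        then obtain d where pd: "p d \<noteq> d" "d \<noteq> a" "d \<noteq> b" by blast
        have dC: "d \<in> ?C" using pd FC by blast
        have dst: "distinct [b,a,d]" using ab pd by auto
        define t where "t = cyc3 b a d"
        define q where "q = t \<circ> p"
        have tp: "t permutes ?C" unfolding t_def by (rule cyc3_permutes[OF dst bC aC dC])
        have qp: "q permutes ?C" unfolding q_def by (rule permutes_compose[OF pp tp])
        have qev: "evenperm q" unfolding q_def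
          using evenperm_comp[OF permutes_imp_permutation[OF finC tp] permutes_imp_permutation[OF finC pp]]
            cyc3_even[OF dst] ev by (simp add: t_def)
        have qa: "q a = a" by (simp add: q_def t_def b_def[symmetric] cyc3_def)
        have sub: "{x. q x \<noteq> x} \<subseteq> ?F - {a}"
        proof
          fix x assume "x \<in> {x. q x \<noteq> x}"
          hence qx: "q x \<noteq> x" by simp
          have "x \<noteq> a" using qx qa by auto
          moreover have "p x \<noteq> x"
          proof
            assume px: "p x = x"
            hence "x \<noteq> a" "x \<noteq> b" "x \<noteq> d" using pa pb pd by auto
            hence "t x = x" by (simp add: t_def cyc3_def)
            thus False using qx px by (simp add: q_def)
          qed
          ultimately show "x \<in> ?F - {a}" by simp
        qed
        have "card {x. q x \<noteq> x} < N"
        proof -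
          have "card {x. q x \<noteq> x} \<le> card (?F - {a})" using card_mono[OF _ sub] finF by simp
          also have "\<dots> < card ?F" by (rule card_Diff1_less[OF finF]) (simp add: pa)
          finally show ?thesis using cN by simp
        qed
        hence Gq: "?G q" using less.IH qp qev by blast
        have dst2: "distinct [b,d,a]" using dst by auto
        have Gt: "?G (cyc3 b d a)" by (rule cyc[OF dst2 bC dC aC])
        have H: "hom_homotopic (SG_verts n k) SG_adj ?C K_adj (cyc3 b d a \<circ> canon_col)
           (cyc3 b d a \<circ> (q \<circ> canon_col))"
          by (rule hh_comp[OF Gq inj_on_subset[OF cyc3_inj[OF dst2] subset_UNIV]])
             (use cyc3_in[OF bC dC aC] in auto)
        have "cyc3 b d a \<circ> (q \<circ> canon_col) = p \<circ> canon_col"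
        proof -
          have "cyc3 b d a \<circ> q = p" unfolding q_def t_def
            using cyc3_inv[OF dst] by (simp add: o_assoc)
          thus ?thesis by (simp add: o_assoc)
        qed
        thus ?thesis using hh_trans[OF Gt H] by simp
      next
        case False
        have "p = transpose a b"
        proof
          fix x show "p x = transpose a b x"
          proof (cases "x = a \<or> x = b")
            case True
            moreover have "p b = a"
            proof -
              have "p (p b) \<noteq> p b"
              proof
                assume "p (p b) = p b"
                hence "p b = b" by (rule injD[OF injp])
                thus False using pb by simp
              qed
              thus ?thesis using False pb by blast
            qed
            ultimately show ?thesis by (auto simp: b_def)
          next
            case c: False
            hence "p x = x" using False by blast
            thus ?thesis using c by simp
          qed
        qed
        hence "\<not> evenperm p" using ab by (simp add: evenperm_swap)
        thus ?thesis using ev by simp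
      qed
    qed
  qed
qed

theorem proposition4p4:
  fixes n k :: nat and \<pi> :: "nat \<Rightarrow> nat"
  assumes "n \<ge> 2" and "k \<ge> 1"
    and "\<pi> permutes K_verts k" and "evenperm \<pi>"
  shows "hom_homotopic (SG_verts n k) SG_adj (K_verts k) K_adj canon_col (\<pi> \<circ> canon_col)"
  using even_main[OF assms(1,2)] assms(3,4) by blast

end
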